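(* Let $n\ge 2$, let $A\in\mathbb{R}^{n\times n}$ be symmetric positive definite, $B=A^{1/2}$, $C=A^{-1}$, $E=\{x:x^{\top}A^{-1}x=1\}$, fix $x_0$ with $x_0^{\top}A^{-1}x_0=1$ and put $y_0=B^{-1}x_0$. For every parallelepiped $P$ inscribed in $E$ having $x_0$ as a vertex, \[ S(P)\le 2^n n^{-\frac{n-2}{2}}\sqrt{\det A}\,\sqrt{\operatorname{tr}(A^{-1})}. \] Write the edge vectors of $P$, with signs chosen so that $x_0=\tfrac12\sum_iv_i$, as $v_i=\lambda_iBu_i$ with $\lambda_i>0$, $U=[u_1\ \cdots\ u_n]\in O(n)$, and set $\beta_i=\langle u_i,y_0\rangle$ and $\alpha_i=\sqrt{(U^{\top}CU)_{ii}}$. If $n\ge3$, equality holds if and only if $\beta_i=1/\sqrt n$ for all $i$ and $\operatorname{diag}(U^{\top}CU)=\frac{\operatorname{tr}(C)}{n}\mathbf 1$. If $n=2$, the bound is sharp (attained for every such $x_0$) and equality holds precisely when $(\alpha_1,\alpha_2)$ is proportional to $(1/\beta_1,1/\beta_2)$.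
   Context: A (centred, $n$-dimensional) parallelepiped with linearly independent edge vectors $v_1,\dots,v_n$ is $P=\{\sum_it_iv_i:|t_i|\le\tfrac12\}$ with vertices $\tfrac12\sum_i\varepsilon_iv_i$, $\varepsilon\in\{\pm1\}^n$; it is inscribed in $E$ if all vertices satisfy $x^{\top}A^{-1}x=1$. For inscribed $P$ the vectors $B^{-1}v_i$ are pairwise orthogonal, so the decomposition $v_i=\lambda_iBu_i$ with $U\in O(n)$ exists, and then $\lambda_i=2\beta_i>0$. $S(P)$ is the total $(n-1)$-dimensional measure of the $2n$ facets: with $G=V^{\top}V$, $V=[v_1\ \cdots\ v_n]$, $S(P)=2\sum_i\sqrt{\det G_{-i,-i}}$. $\mathbf 1=(1,\dots,1)^{\top}$, and $\operatorname{diag}(M)$ is the vector of diagonal entries of $M$. *)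

theory Defs
  imports "HOL-Analysis.Analysis"
begin

definition sym_pos_def :: "real^'n^'n \<Rightarrow> bool" where
  "sym_pos_def A \<longleftrightarrow> transpose A = A \<and> (\<forall>x. x \<noteq> 0 \<longrightarrow> x \<bullet> (A *v x) > 0)"

definition ell_form :: "real^'n^'n \<Rightarrow> real^'n \<Rightarrow> real" where
  "ell_form A x = x \<bullet> (matrix_inv A *v x)"

definition edge_matrix :: "('n \<Rightarrow> real^'n) \<Rightarrow> real^'n^'n" where
  "edge_matrix v = (\<chi> r c. v c $ r)"

definition sign_vec :: "('n \<Rightarrow> real) \<Rightarrow> bool" where
  "sign_vec e \<longleftrightarrow> (\<forall>i. e i = 1 \<or> e i = -1)"

definition vertex :: "('n::finite \<Rightarrow> real^'n) \<Rightarrow> ('n \<Rightarrow> real) \<Rightarrow> real^'n" where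
  "vertex v e = (1/2) *\<^sub>R (\<Sum>i\<in>UNIV. e i *\<^sub>R v i)"

text \<open>Determinant of the principal submatrix obtained by deleting row and column i
  (Leibniz formula over permutations of the remaining indices).\<close>
definition del_minor_det :: "real^'n^'n \<Rightarrow> 'n \<Rightarrow> real" where
  "del_minor_det M i =
     (\<Sum>p\<in>{p. p permutes (UNIV - {i})}. of_int (sign p) * (\<Prod>j\<in>UNIV - {i}. M $ j $ p j))"

text \<open>Total facet measure S(P) = 2 sum_i sqrt(det G_{-i,-i}), G = V^T V.\<close>
definition surface_area :: "('n::finite \<Rightarrow> real^'n) \<Rightarrow> real" where
  "surface_area v = 2 * (\<Sum>i\<in>UNIV.
      sqrt (del_minor_det (transpose (edge_matrix v) ** edge_matrix v) i))"

definition inscribed :: "real^'n^'n \<Rightarrow> ('n::finite \<Rightarrow> real^'n) \<Rightarrow> bool" where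
  "inscribed A v \<longleftrightarrow> inj v \<and> independent (range v) \<and>
     (\<forall>e. sign_vec e \<longrightarrow> ell_form A (vertex v e) = 1)"

definition has_vertex :: "('n::finite \<Rightarrow> real^'n) \<Rightarrow> real^'n \<Rightarrow> bool" where
  "has_vertex v x \<longleftrightarrow> (\<exists>e. sign_vec e \<and> vertex v e = x)"

end

theory Submission
  imports Defs "HOL-Analysis.Analysis"
begin


lemma amgm_pow:
  fixes t :: "'a \<Rightarrow> real"
  assumes "finite S" "S \<noteq> {}" "\<forall>i\<in>S. t i \<ge> 0"
  shows "(\<Prod>i\<in>S. t i) \<le> ((\<Sum>i\<in>S. t i) / card S) ^ card S"
proof -
  have P0: "(\<Prod>i\<in>S. t i) \<ge> 0" using assms by (simp add: prod_nonneg)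
  have c: "card S > 0" using assms by (simp add: card_gt_0_iff)
  have "(\<Prod>i\<in>S. t i) powr (1 / card S) \<le> (\<Sum>i\<in>S. t i / card S)"
    using arith_geom_mean[OF assms(1,2), of t] assms(3) by auto
  also have "\<dots> = (\<Sum>i\<in>S. t i) / card S" by (simp add: sum_divide_distrib)
  finally have h: "(\<Prod>i\<in>S. t i) powr (1 / card S) \<le> (\<Sum>i\<in>S. t i) / card S" .
  have "(\<Prod>i\<in>S. t i) = ((\<Prod>i\<in>S. t i) powr (1 / card S)) ^ card S"
  proof (cases "(\<Prod>i\<in>S. t i) = 0")
    case True then show ?thesis using c by simp
  next
    case False
    then have pp: "(\<Prod>i\<in>S. t i) > 0" using P0 by simp
    have "((\<Prod>i\<in>S. t i) powr (1 / card S)) ^ card S = ((\<Prod>i\<in>S. t i) powr (1 / card S)) powr (card S)"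
      using pp by (simp add: powr_realpow)
    also have "\<dots> = (\<Prod>i\<in>S. t i)" using c pp by (simp add: powr_powr)
    finally show ?thesis by simp
  qed
  also have "\<dots> \<le> ((\<Sum>i\<in>S. t i) / card S) ^ card S"
    by (rule power_mono[OF h]) simp
  finally show ?thesis .
qed

lemma bern_step:
  fixes a s :: real and k :: nat
  assumes a: "a > 0" and s: "s > 0" and k: "k \<ge> 1"
  shows "(real k + 1) ^ (k - 1) * a ^ (k - 1) * (a + k * s) \<le> (k * a + s) ^ k"
proof -
  define x where "x = (s - a) / ((k + 1) * a)"
  have kp: "(k + 1) * a > 0" using a by simp
  have ka: "real k * a \<ge> 0" using a by simp
  have h: "-((k+1)*a) \<le> s - a" using ka s by (simp add: algebra_simps)
  have x1: "-1 \<le> x" unfolding x_def using kp h by (simp add: le_divide_eq)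
  have dx: "((k + 1) * a) * x = s - a" proof -
    have "(k + 1) * a \<noteq> 0" using kp by linarith
    then show ?thesis unfolding x_def by (metis times_divide_eq_right nonzero_mult_div_cancel_left)
  qed
  have e: "k * a + s = (k + 1) * a * (1 + x)" using dx by (simp add: algebra_simps)
  have "(real k + 1) ^ (k - 1) * a ^ (k - 1) * (a + k * s)
        = (real k + 1) ^ k * a ^ k * (1 + k * x)"
  proof -
    have pk: "(real k + 1) ^ k = (real k + 1) ^ (k - 1) * (k + 1)"
      and ak: "a ^ k = a ^ (k - 1) * a"
      using k by (cases k; simp add: algebra_simps)+
    have q: "(real k + 1) * a * (1 + k * x) = a + k * s"
    proof -
      have "(real k + 1) * a * (1 + k * x) = (real k + 1) * a + k * (((k + 1) * a) * x)"
        by (simp add: algebra_simps)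
      also have "\<dots> = a + k * s" unfolding dx by (simp add: algebra_simps)
      finally show ?thesis .
    qed
    have "(real k + 1) ^ k * a ^ k * (1 + k * x) = (real k + 1) ^ (k - 1) * a ^ (k - 1) * ((real k + 1) * a * (1 + k * x))"
      unfolding pk ak by (simp add: algebra_simps)
    then show ?thesis unfolding q by simp
  qed
  also have "\<dots> \<le> (real k + 1) ^ k * a ^ k * (1 + x) ^ k"
    by (rule mult_left_mono[OF Bernoulli_inequality[OF x1]]) (use a in simp)
  also have "\<dots> = (k * a + s) ^ k" unfolding e by (simp add: power_mult_distrib add.commute)
  finally show ?thesis .
qed

lemma maclaurin_aux:
  fixes t :: "'a \<Rightarrow> real"
  assumes "finite S" "S \<noteq> {}" "\<forall>i\<in>S. t i > 0"
  shows "real (card S) ^ (card S - 1) * ((\<Prod>i\<in>S. t i) * (\<Sum>i\<in>S. 1 / t i))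
           \<le> real (card S) * (\<Sum>i\<in>S. t i) ^ (card S - 1)"
  using assms
proof (induction S rule: finite_ne_induct)
  case (singleton x)
  then show ?case by simp
next
  case (insert x F)
  define k where "k = card F"
  define P where "P = (\<Prod>i\<in>F. t i)"
  define Q where "Q = (\<Sum>i\<in>F. 1 / t i)"
  define T where "T = (\<Sum>i\<in>F. t i)"
  define s where "s = t x"
  have k1: "k \<ge> 1" using insert k_def by (simp add: Suc_leI card_gt_0_iff)
  have s0: "s > 0" using insert s_def by simp
  have T0: "T > 0" using insert T_def by (simp add: sum_pos)
  have P0: "P > 0" using insert P_def by (simp add: prod_pos)
  have cI: "card (insert x F) = k + 1" using insert k_def by simp
  define a where "a = T / k"
  have a0: "a > 0" using T0 k1 a_def by simp
  have Tk: "T = k * a" using k1 a_def by simp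
  have IH: "real k ^ (k - 1) * (P * Q) \<le> k * T ^ (k - 1)"
    using insert k_def P_def Q_def T_def by simp
  have PQ: "P * Q \<le> k * a ^ (k - 1)"
  proof -
    have "T ^ (k - 1) = real k ^ (k - 1) * a ^ (k - 1)" unfolding Tk by (simp add: power_mult_distrib)
    then have "real k ^ (k - 1) * (P * Q) \<le> real k ^ (k - 1) * (k * a ^ (k - 1))"
      using IH by (simp add: algebra_simps)
    moreover have "real k ^ (k - 1) > 0" using k1 by simp
    ultimately show ?thesis by simp
  qed
  have Pa: "P \<le> a ^ k"
    using amgm_pow[of F t] insert unfolding P_def a_def T_def k_def by (simp add: less_imp_le)
  have Fe: "(\<Prod>i\<in>insert x F. t i) * (\<Sum>i\<in>insert x F. 1 / t i) = P + s * (P * Q)"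
    using insert s0 unfolding P_def Q_def s_def by (simp add: field_simps)
  have "P + s * (P * Q) \<le> a ^ k + s * (k * a ^ (k - 1))"
    using Pa PQ s0 by (simp add: add_mono)
  also have "\<dots> = a ^ (k - 1) * (a + k * s)"
    using k1 by (cases k) (auto simp: algebra_simps)
  finally have F1: "P + s * (P * Q) \<le> a ^ (k - 1) * (a + k * s)" .
  have "(real k + 1) ^ k * (P + s * (P * Q)) \<le> (real k + 1) * ((real k + 1) ^ (k - 1) * a ^ (k - 1) * (a + k * s))"
  proof -
    have e1: "(real k + 1) ^ k = (real k + 1) * (real k + 1) ^ (k - 1)" using k1 by (cases k) auto
    have "((real k + 1) * (real k + 1) ^ (k - 1)) * (P + s * (P * Q)) \<le> ((real k + 1) * (real k + 1) ^ (k - 1)) * (a ^ (k - 1) * (a + k * s))"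
      by (rule mult_left_mono[OF F1]) simp
    then show ?thesis unfolding e1 by (simp add: mult.assoc)
  qed
  also have "\<dots> \<le> (real k + 1) * (k * a + s) ^ k"
    by (rule mult_left_mono[OF bern_step[OF a0 s0 k1]]) simp
  finally have "(real k + 1) ^ k * (P + s * (P * Q)) \<le> (real k + 1) * (T + s) ^ k" unfolding Tk .
  moreover have "(\<Sum>i\<in>insert x F. t i) = T + s" using insert unfolding T_def s_def by simp
  ultimately show ?case unfolding cI Fe by (simp add: add.commute)
qed

lemma F_split:
  fixes t :: "'a \<Rightarrow> real"
  assumes "finite S" "i \<in> S" "j \<in> S" "i \<noteq> j" "t i > 0" "t j > 0"
  shows "(\<Prod>l\<in>S. t l) * (\<Sum>l\<in>S. 1 / t l) =
     (\<Prod>l\<in>S - {i, j}. t l) * (t i * t j * (\<Sum>l\<in>S - {i, j}. 1 / t l) + t i + t j)"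
    and "(\<Sum>l\<in>S. t l) = t i + t j + (\<Sum>l\<in>S - {i, j}. t l)"
proof -
  have S: "S = insert i (insert j (S - {i, j}))" using assms by auto
  have f: "finite (S - {i,j})" using assms by simp
  have p: "(\<Prod>l\<in>S. t l) = t i * t j * (\<Prod>l\<in>S - {i, j}. t l)"
    by (subst S) (use f assms in \<open>simp add: prod.insert_remove\<close>)
  have q: "(\<Sum>l\<in>S. 1 / t l) = 1 / t i + 1 / t j + (\<Sum>l\<in>S - {i, j}. 1 / t l)"
    by (subst S) (use f assms in \<open>simp add: sum.insert_remove\<close>)
  show "(\<Prod>l\<in>S. t l) * (\<Sum>l\<in>S. 1 / t l) =
     (\<Prod>l\<in>S - {i, j}. t l) * (t i * t j * (\<Sum>l\<in>S - {i, j}. 1 / t l) + t i + t j)"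
    unfolding p q using assms by (simp add: field_simps)
  show "(\<Sum>l\<in>S. t l) = t i + t j + (\<Sum>l\<in>S - {i, j}. t l)"
    by (subst S) (use f assms in \<open>simp add: sum.insert_remove\<close>)
qed

lemma maclaurin_eq:
  fixes t :: "'a \<Rightarrow> real"
  assumes fin: "finite S" and c3: "card S \<ge> 3" and pos: "\<forall>i\<in>S. t i > 0"
    and eq: "real (card S) ^ (card S - 1) * ((\<Prod>i\<in>S. t i) * (\<Sum>i\<in>S. 1 / t i))
           = real (card S) * (\<Sum>i\<in>S. t i) ^ (card S - 1)"
    and i: "i \<in> S" and j: "j \<in> S"
  shows "t i = t j"
proof (rule ccontr)
  assume ne: "t i \<noteq> t j"
  then have ij: "i \<noteq> j" by auto
  define m where "m = (t i + t j) / 2"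
  define t' where "t' = t(i := m, j := m)"
  have Sne: "S \<noteq> {}" using i by auto
  have ti: "t i > 0" and tj: "t j > 0" using pos i j by auto
  then have m0: "m > 0" unfolding m_def by simp
  have pos': "\<forall>l\<in>S. t' l > 0" using pos m0 t'_def by simp
  have R: "S - {i, j} \<noteq> {}"
  proof
    assume "S - {i, j} = {}"
    then have "S \<subseteq> {i, j}" by auto
    then have "card S \<le> 2" by (metis card_2_iff card_mono finite.emptyI finite_insert ij)
    then show False using c3 by simp
  qed
  have same: "\<And>l. l \<in> S - {i, j} \<Longrightarrow> t' l = t l" using t'_def by simp
  have PR: "(\<Prod>l\<in>S - {i, j}. t l) > 0" using pos by (intro prod_pos) auto
  have QR: "(\<Sum>l\<in>S - {i, j}. 1 / t l) > 0" using pos R fin by (intro sum_pos) auto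
  have mm: "t i * t j < m * m"
  proof -
    have "0 < (t i - t j)^2" using ne by simp
    then show ?thesis unfolding m_def by (simp add: power2_eq_square field_simps)
  qed
  have lt: "(\<Prod>l\<in>S. t l) * (\<Sum>l\<in>S. 1 / t l) < (\<Prod>l\<in>S. t' l) * (\<Sum>l\<in>S. 1 / t' l)"
  proof -
    have e1: "(\<Prod>l\<in>S. t' l) * (\<Sum>l\<in>S. 1 / t' l) =
       (\<Prod>l\<in>S - {i, j}. t l) * (m * m * (\<Sum>l\<in>S - {i, j}. 1 / t l) + m + m)"
    proof -
      have "(\<Prod>l\<in>S. t' l) * (\<Sum>l\<in>S. 1 / t' l) =
        (\<Prod>l\<in>S - {i, j}. t' l) * (t' i * t' j * (\<Sum>l\<in>S - {i, j}. 1 / t' l) + t' i + t' j)"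
        by (rule F_split(1)[OF fin i j ij]) (use pos' i j in auto)
      moreover have "(\<Prod>l\<in>S - {i, j}. t' l) = (\<Prod>l\<in>S - {i, j}. t l)"
        by (rule prod.cong) (auto simp: same)
      moreover have "(\<Sum>l\<in>S - {i, j}. 1 / t' l) = (\<Sum>l\<in>S - {i, j}. 1 / t l)"
        by (rule sum.cong) (auto simp: same)
      moreover have "t' i = m" "t' j = m" using ij unfolding t'_def by auto
      ultimately show ?thesis by simp
    qed
    have "t i * t j * (\<Sum>l\<in>S - {i, j}. 1 / t l) + t i + t j < m * m * (\<Sum>l\<in>S - {i, j}. 1 / t l) + m + m"
    proof -
      have "t i * t j * (\<Sum>l\<in>S - {i, j}. 1 / t l) < m * m * (\<Sum>l\<in>S - {i, j}. 1 / t l)"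
        using mm QR by (rule mult_strict_right_mono)
      moreover have "t i + t j = m + m" unfolding m_def by simp
      ultimately show ?thesis by linarith
    qed
    then show ?thesis unfolding e1 F_split(1)[OF fin i j ij ti tj] using PR by (rule mult_strict_left_mono)
  qed
  have sm: "(\<Sum>l\<in>S. t' l) = (\<Sum>l\<in>S. t l)"
  proof -
    have "(\<Sum>l\<in>S - {i, j}. t' l) = (\<Sum>l\<in>S - {i, j}. t l)"
      by (rule sum.cong) (auto simp: same)
    moreover have "t' i = m" "t' j = m" using ij unfolding t'_def by auto
    ultimately show ?thesis using F_split(2)[OF fin i j ij, of t'] F_split(2)[OF fin i j ij, of t] pos' pos i j
      unfolding m_def by simp
  qed
  have "real (card S) ^ (card S - 1) * ((\<Prod>i\<in>S. t i) * (\<Sum>i\<in>S. 1 / t i))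
      < real (card S) * (\<Sum>i\<in>S. t i) ^ (card S - 1)"
  proof -
    let ?k = "real (card S)"
    have kp: "?k ^ (card S - 1) > 0" using c3 by simp
    note h = maclaurin_aux[OF fin Sne pos']
    show ?thesis using mult_strict_left_mono[OF lt kp] h sm by simp
  qed
  then show False using eq by simp
qed

lemma cs_eq:
  fixes a b :: "'a \<Rightarrow> real"
  assumes fin: "finite S" and bp: "\<forall>i\<in>S. b i > 0" and ne: "S \<noteq> {}" and ap: "\<forall>i\<in>S. a i \<ge> 0"
  shows "(\<Sum>i\<in>S. a i * b i) \<le> sqrt (\<Sum>i\<in>S. (a i)^2) * sqrt (\<Sum>i\<in>S. (b i)^2)"
    and "(\<Sum>i\<in>S. a i * b i) = sqrt (\<Sum>i\<in>S. (a i)^2) * sqrt (\<Sum>i\<in>S. (b i)^2)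
          \<longleftrightarrow> (\<exists>c. \<forall>i\<in>S. a i = c * b i)"
proof -
  define B where "B = (\<Sum>i\<in>S. (b i)^2)"
  define A where "A = (\<Sum>i\<in>S. (a i)^2)"
  define X where "X = (\<Sum>i\<in>S. a i * b i)"
  define c where "c = X / B"
  have B0: "B > 0" unfolding B_def using fin ne bp by (intro sum_pos) auto
  have X0: "X \<ge> 0" unfolding X_def using ap bp by (intro sum_nonneg) (auto simp: less_imp_le)
  have A0: "A \<ge> 0" unfolding A_def by (intro sum_nonneg) auto
  have id: "(\<Sum>i\<in>S. (a i - c * b i)^2) = A - X^2 / B"
  proof -
    have "(\<Sum>i\<in>S. (a i - c * b i)^2) = (\<Sum>i\<in>S. (a i)^2 - 2 * c * (a i * b i) + c^2 * (b i)^2)"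
      by (rule sum.cong) (auto simp: power2_eq_square algebra_simps)
    also have "\<dots> = A - 2 * c * X + c^2 * B"
      unfolding A_def B_def X_def by (simp add: sum.distrib sum_subtractf sum_distrib_left)
    also have "\<dots> = A - X^2 / B" unfolding c_def using B0 by (simp add: power2_eq_square field_simps)
    finally show ?thesis .
  qed
  have nn: "(\<Sum>i\<in>S. (a i - c * b i)^2) \<ge> 0" by (intro sum_nonneg) auto
  then have XA: "X^2 \<le> A * B" using id B0 by (simp add: field_simps)
  have sq: "sqrt A * sqrt B = sqrt (A * B)" by (simp add: real_sqrt_mult)
  show "X \<le> sqrt A * sqrt B" unfolding sq using XA X0 by (simp add: real_le_rsqrt)
  then show "X = sqrt A * sqrt B \<longleftrightarrow> (\<exists>c. \<forall>i\<in>S. a i = c * b i)" unfolding A_def[symmetric] B_def[symmetric] X_def[symmetric]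
  proof -
    have "X = sqrt A * sqrt B \<Longrightarrow> \<forall>i\<in>S. a i = c * b i"
    proof -
      assume "X = sqrt A * sqrt B"
      then have "X^2 = A * B" unfolding sq using A0 B0 by simp
      then have "(\<Sum>i\<in>S. (a i - c * b i)^2) = 0" unfolding id using B0 by simp
      then have "\<forall>i\<in>S. (a i - c * b i)^2 = 0" using fin sum_nonneg_eq_0_iff[of S "\<lambda>i. (a i - c * b i)^2"] by simp
      then show ?thesis by simp
    qed
    moreover have "X = sqrt A * sqrt B" if "\<forall>i\<in>S. a i = d * b i" for d
    proof -
      obtain i where i: "i \<in> S" using ne by auto
      have "0 \<le> d * b i" "b i > 0" using that ap bp i by auto
      then have d0: "d \<ge> 0" by (simp add: zero_le_mult_iff)
      have "X = d * B" unfolding X_def B_def using that by (simp add: sum_distrib_left power2_eq_square mult.assoc)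
      moreover have "A = d^2 * B" unfolding A_def B_def using that by (simp add: sum_distrib_left power_mult_distrib)
      ultimately show ?thesis using d0 B0 by (simp add: real_sqrt_mult power2_eq_square)
    qed
    ultimately show ?thesis unfolding A_def B_def X_def by blast
  qed
qed

lemma sqrt_R:
  fixes N :: nat assumes "N \<ge> 1"
  shows "sqrt (real N / real N ^ (N - 1)) = real N powr (- (real N - 2) / 2)"
proof -
  have Np: "real N > 0" using assms by simp
  have "real N / real N ^ (N - 1) = real N powr (1 - real (N - 1))"
  proof -
    have "real N powr (1 - real (N - 1)) = real N powr 1 / real N powr real (N - 1)" by (rule powr_diff)
    also have "\<dots> = real N / real N ^ (N - 1)" using powr_realpow[OF Np, of "N - 1"] Np by simp
    finally show ?thesis by simp
  qed
  also have "\<dots> = real N powr (- (real N - 2))" using assms by (simp add: of_nat_diff)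
  finally have "sqrt (real N / real N ^ (N - 1)) = sqrt (real N powr (- (real N - 2)))" by simp
  also have "\<dots> = (real N powr (- (real N - 2))) powr (1/2)" using Np by (simp add: powr_half_sqrt)
  also have "\<dots> = real N powr (- (real N - 2) / 2)" by (simp add: powr_powr)
  finally show ?thesis .
qed




lemma key_ineq:
  fixes al be :: "'a \<Rightarrow> real"
  assumes fin: "finite S" and N: "card S \<ge> 2" and bp: "\<forall>i\<in>S. be i > 0" and ap: "\<forall>i\<in>S. al i > 0"
    and b1: "(\<Sum>i\<in>S. (be i)^2) = 1"
  defines "K \<equiv> (\<Prod>i\<in>S. be i) * (\<Sum>i\<in>S. al i / be i)"
    and "M \<equiv> sqrt (\<Sum>i\<in>S. (al i)^2) * real (card S) powr (- (real (card S) - 2) / 2)"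
  shows "K \<le> M"
    and "K = M \<longleftrightarrow> (\<exists>c. \<forall>i\<in>S. al i = c * (1 / be i)) \<and> (card S \<ge> 3 \<longrightarrow> (\<forall>i\<in>S. be i = 1 / sqrt (card S)))"
proof -
  define N where "N = card S"
  have ne: "S \<noteq> {}" using N by auto
  define X where "X = (\<Sum>i\<in>S. al i / be i)"
  define X0 where "X0 = sqrt (\<Sum>i\<in>S. (al i)^2) * sqrt (\<Sum>i\<in>S. (1 / be i)^2)"
  define F where "F = (\<Prod>i\<in>S. (be i)^2) * (\<Sum>i\<in>S. 1 / (be i)^2)"
  define R where "R = real N / real N ^ (N - 1)"
  define SA where "SA = sqrt (\<Sum>i\<in>S. (al i)^2)"
  have P0: "(\<Prod>i\<in>S. be i) > 0" using bp by (intro prod_pos) auto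
  have SA0: "SA > 0" unfolding SA_def using fin ne ap by (intro real_sqrt_gt_zero sum_pos) auto
  have F0: "F \<ge> 0" unfolding F_def by (intro mult_nonneg_nonneg prod_nonneg sum_nonneg) auto
  have CS: "X \<le> X0" and CSe: "X = X0 \<longleftrightarrow> (\<exists>c. \<forall>i\<in>S. al i = c * (1 / be i))"
    using cs_eq[OF fin _ ne, of "\<lambda>i. 1 / be i" al] bp ap unfolding X_def X0_def by (auto simp: less_imp_le divide_inverse)
  have KX: "K = (\<Prod>i\<in>S. be i) * X" unfolding K_def X_def ..
  have PX0: "(\<Prod>i\<in>S. be i) * X0 = SA * sqrt F"
  proof -
    have "sqrt F = sqrt ((\<Prod>i\<in>S. be i)^2) * sqrt (\<Sum>i\<in>S. (1 / be i)^2)"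
      unfolding F_def by (simp add: real_sqrt_mult power_divide prod_power_distrib)
    also have "\<dots> = (\<Prod>i\<in>S. be i) * sqrt (\<Sum>i\<in>S. (1 / be i)^2)" using P0 by simp
    finally show ?thesis unfolding X0_def SA_def by simp
  qed
  have MR: "M = SA * sqrt R" unfolding M_def SA_def R_def N_def using sqrt_R[of "card S"] N by simp
  have tpos: "\<forall>i\<in>S. (be i)^2 > 0"
  proof
    fix i assume "i \<in> S"
    then have "be i > 0" using bp by blast
    then show "(be i)^2 > 0" by simp
  qed
  have mac: "real N ^ (N - 1) * F \<le> real N * 1"
    using maclaurin_aux[OF fin ne tpos] b1 unfolding F_def N_def by simp
  have Np: "real N ^ (N - 1) > 0" using N N_def by simp
  have FR: "F \<le> R" unfolding R_def using mac Np by (simp add: field_simps)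
  have "K \<le> (\<Prod>i\<in>S. be i) * X0" unfolding KX using CS P0 by simp
  also have "\<dots> \<le> M" unfolding PX0 MR using FR SA0 by simp
  finally show "K \<le> M" .
  have F2: "F = R" if c2: "card S = 2"
  proof -
    obtain p q where pq: "S = {p, q}" "p \<noteq> q" using c2 unfolding card_2_iff by blast
    have bpq: "be p > 0" "be q > 0" using bp pq by auto
    have "F = (be p)^2 * (be q)^2 * (1/(be p)^2 + 1/(be q)^2)" unfolding F_def pq(1) using pq(2) by simp
    also have "\<dots> = (be p)^2 + (be q)^2" using bpq by (simp add: field_simps)
    also have "\<dots> = 1" using b1 pq by simp
    finally show ?thesis unfolding R_def N_def using c2 by simp
  qed
  have F3: "F = R" if h3: "\<forall>i\<in>S. be i = 1 / sqrt N"
  proof -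
    have Npos: "real N > 0" using N N_def by simp
    have sq: "(be i)^2 = 1 / real N" if "i \<in> S" for i
      using h3 that Npos by (simp add: power_divide)
    have "F = (\<Prod>i\<in>S. 1 / real N) * (\<Sum>i\<in>S. real N)"
      unfolding F_def using sq by (simp cong: prod.cong sum.cong)
    also have "\<dots> = (1 / real N) ^ N * (real N * real N)" unfolding N_def by simp
    also have "\<dots> = R"
    proof -
      obtain m where m: "N = Suc m" using N N_def not0_implies_Suc by fastforce
      have "(1 / real N) ^ N * (real N * real N) = real N * real N / (real N * real N ^ m)"
        unfolding m[symmetric] using m by (simp add: power_one_over)
      also have "\<dots> = real N / real N ^ m" using Npos by simp
      finally have "(1 / real N) ^ N * (real N * real N) = real N / real N ^ m" .
      then show ?thesis unfolding R_def m by simp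
    qed
    finally show ?thesis .
  qed
  show "K = M \<longleftrightarrow> (\<exists>c. \<forall>i\<in>S. al i = c * (1 / be i)) \<and> (card S \<ge> 3 \<longrightarrow> (\<forall>i\<in>S. be i = 1 / sqrt (card S)))"
  proof
    assume KM: "K = M"
    have a: "(\<Prod>i\<in>S. be i) * X = (\<Prod>i\<in>S. be i) * X0" and b: "SA * sqrt F = SA * sqrt R"
    proof -
      have u1: "(\<Prod>i\<in>S. be i) * X \<le> (\<Prod>i\<in>S. be i) * X0" using CS P0 by simp
      have u2: "SA * sqrt F \<le> SA * sqrt R" using FR SA0 by simp
      show "(\<Prod>i\<in>S. be i) * X = (\<Prod>i\<in>S. be i) * X0" using u1 u2 KM KX PX0 MR by linarith
      show "SA * sqrt F = SA * sqrt R" using u1 u2 KM KX PX0 MR by linarith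
    qed
    have "X = X0" using a P0 by simp
    then have c1: "\<exists>c. \<forall>i\<in>S. al i = c * (1 / be i)" using CSe by simp
    have "F = R" using b SA0 F0 R_def by simp
    have c2: "\<forall>i\<in>S. be i = 1 / sqrt (card S)" if "card S \<ge> 3"
    proof
      fix i assume i: "i \<in> S"
      have eq: "real (card S) ^ (card S - 1) * ((\<Prod>i\<in>S. (be i)^2) * (\<Sum>i\<in>S. 1 / (be i)^2))
           = real (card S) * (\<Sum>i\<in>S. (be i)^2) ^ (card S - 1)"
        using \<open>F = R\<close> Np unfolding F_def R_def N_def b1 by (simp add: field_simps)
      have all: "(be j)^2 = (be i)^2" if "j \<in> S" for j
        using maclaurin_eq[OF fin \<open>card S \<ge> 3\<close> tpos eq that i] .
      have "(\<Sum>j\<in>S. (be j)^2) = card S * (be i)^2" using all by simp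
      then have "(be i)^2 = 1 / card S" using b1 N by (simp add: field_simps)
      then have "be i = sqrt (1 / card S)" using bp i by (metis less_eq_real_def real_sqrt_unique)
      then show "be i = 1 / sqrt (card S)" by (simp add: real_sqrt_divide)
    qed
    show "(\<exists>c. \<forall>i\<in>S. al i = c * (1 / be i)) \<and> (card S \<ge> 3 \<longrightarrow> (\<forall>i\<in>S. be i = 1 / sqrt (card S)))"
      using c1 c2 by blast
  next
    assume h: "(\<exists>c. \<forall>i\<in>S. al i = c * (1 / be i)) \<and> (card S \<ge> 3 \<longrightarrow> (\<forall>i\<in>S. be i = 1 / sqrt (card S)))"
    then have "X = X0" using CSe by simp
    moreover have "F = R"
    proof (cases "card S = 2")
      case True then show ?thesis using F2 by simp
    next
      case False then have "card S \<ge> 3" using N by simp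
      then show ?thesis using F3 h N_def by simp
    qed
    ultimately show "K = M" using KX PX0 MR by simp
  qed
qed



lemma del_minor_det_col:
  fixes M :: "real^'n^'n"
  shows "del_minor_det M i = det (\<chi> r c. if c = i then (if r = i then 1 else 0) else M$r$c)"
proof -
  let ?N = "(\<chi> r c. if c = i then (if r = i then 1 else 0) else M$r$c) :: real^'n^'n"
  have sub: "{p. p permutes (UNIV - {i})} \<subseteq> {p. p permutes (UNIV::'n set)}"
    by (auto intro: permutes_subset)
  have z: "of_int (sign p) * (\<Prod>r\<in>UNIV. ?N$r$p r) = 0"
    if "p \<in> {p. p permutes (UNIV::'n set)} - {p. p permutes (UNIV - {i})}" for p
  proof -
    from that have pu: "p permutes (UNIV::'n set)" and np: "\<not> p permutes (UNIV - {i})" by auto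
    have "p i \<noteq> i"
    proof
      assume "p i = i"
      then have "p permutes (UNIV - {i})" using pu unfolding permutes_def by auto
      then show False using np by simp
    qed
    obtain r where r: "p r = i" using pu by (meson permutes_univ)
    then have "r \<noteq> i" using \<open>p i \<noteq> i\<close> by auto
    then have "?N$r$p r = 0" using r by simp
    then have "(\<Prod>r\<in>UNIV. ?N$r$p r) = 0" by (intro prod_zero) (simp, use UNIV_I in blast)
    then show ?thesis by simp
  qed
  have "det ?N = (\<Sum>p\<in>{p. p permutes (UNIV::'n set)}. of_int (sign p) * (\<Prod>r\<in>UNIV. ?N$r$p r))"
    unfolding det_def by simp
  also have "\<dots> = (\<Sum>p\<in>{p. p permutes (UNIV - {i})}. of_int (sign p) * (\<Prod>r\<in>UNIV. ?N$r$p r))"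
    apply (rule sum.mono_neutral_right)
    apply (simp add: finite_permutations)
    apply (rule sub)
    apply (rule ballI, erule z)
    done
  also have "\<dots> = del_minor_det M i"
    unfolding del_minor_det_def
  proof (rule sum.cong[OF refl])
    fix p assume "p \<in> {p. p permutes (UNIV - {i})}"
    then have pp: "p permutes (UNIV - {i})" by simp
    have pi: "p i = i" using pp unfolding permutes_def by auto
    have pr: "p r \<noteq> i" if "r \<noteq> i" for r
      using pp pi that by (metis permutes_inj injD)
    have "(\<Prod>r\<in>UNIV. ?N$r$p r) = ?N$i$p i * (\<Prod>r\<in>UNIV - {i}. ?N$r$p r)"
      by (simp add: prod.remove)
    also have "\<dots> = (\<Prod>r\<in>UNIV - {i}. M$r$p r)"
      using pi pr by (auto intro!: prod.cong)
    finally show "of_int (sign p) * (\<Prod>r\<in>UNIV. ?N$r$p r) = of_int (sign p) * (\<Prod>j\<in>UNIV - {i}. M$j$p j)"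
      by simp
  qed
  finally show ?thesis by simp
qed

lemma del_minor_det_inv:
  fixes M X :: "real^'n^'n"
  assumes "M ** X = mat 1"
  shows "del_minor_det M i = det M * X$i$i"
proof -
  define x where "x = X *v axis i 1"
  have Mx: "M *v x = axis i 1" unfolding x_def using assms by (simp add: matrix_vector_mul_assoc)
  have xi: "x$i = X$i$i" unfolding x_def by (simp add: matrix_vector_mult_def axis_def if_distrib cong: if_cong)
  have "del_minor_det M i = det (\<chi> r c. if c = i then (M *v x)$r else M$r$c)"
    unfolding del_minor_det_col Mx by (rule arg_cong[where f=det]) (simp add: vec_eq_iff axis_def)
  also have "\<dots> = x$i * det M" by (rule cramer_lemma)
  finally show ?thesis using xi by simp
qed

lemma sp_invertible:
  fixes M :: "real^'n^'n"
  assumes "sym_pos_def M" shows "invertible M"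
proof -
  have "\<forall>x. M *v x = 0 \<longrightarrow> x = 0"
  proof (intro allI impI)
    fix x assume h: "M *v x = 0"
    show "x = 0"
    proof (rule ccontr)
      assume "x \<noteq> 0"
      then have "x \<bullet> (M *v x) > 0" using assms unfolding sym_pos_def_def by blast
      then show False using h by simp
    qed
  qed
  then show ?thesis unfolding invertible_left_inverse matrix_left_invertible_ker .
qed

lemma minv_props:
  fixes M :: "real^'n^'n"
  assumes "invertible M"
  shows "M ** matrix_inv M = mat 1" "matrix_inv M ** M = mat 1"
proof -
  have "\<exists>A'. M ** A' = mat 1 \<and> A' ** M = mat 1" using assms unfolding invertible_def by blast
  then have "M ** matrix_inv M = mat 1 \<and> matrix_inv M ** M = mat 1" unfolding matrix_inv_def by (rule someI_ex)
  then show "M ** matrix_inv M = mat 1" "matrix_inv M ** M = mat 1" by auto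
qed

lemma minv_unique:
  fixes M X :: "real^'n^'n"
  assumes "M ** X = mat 1"
  shows "matrix_inv M = X"
proof -
  have inv: "invertible M" using assms invertible_right_inverse by blast
  have "matrix_inv M = matrix_inv M ** (M ** X)" using assms by simp
  also have "\<dots> = (matrix_inv M ** M) ** X" by (simp add: matrix_mul_assoc)
  also have "\<dots> = X" using minv_props[OF inv] by simp
  finally show ?thesis .
qed

lemma dot_transpose:
  fixes M :: "real^'n^'n"
  shows "x \<bullet> (M *v y) = (transpose M *v x) \<bullet> y"
  by (simp add: dot_lmul_matrix)

lemma sym_transpose: "sym_pos_def M \<Longrightarrow> transpose M = M"
  unfolding sym_pos_def_def by simp

lemma minv_sym:
  fixes M :: "real^'n^'n"
  assumes "transpose M = M" "invertible M"
  shows "transpose (matrix_inv M) = matrix_inv M"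
proof -
  have "transpose (matrix_inv M ** M) = mat 1" using minv_props(2)[OF assms(2)] by simp
  then have "M ** transpose (matrix_inv M) = mat 1" by (simp add: matrix_transpose_mul assms(1))
  then show ?thesis by (rule minv_unique[symmetric])
qed

locale ellip =
  fixes A B :: "real^'n^'n"
  assumes A: "sym_pos_def A" and B: "sym_pos_def B" and BB: "B ** B = A"
begin

definition "Bi = matrix_inv B"
definition "C = matrix_inv A"

lemma invB: "invertible B" using sp_invertible[OF B] .
lemma BBi: "B ** Bi = mat 1" "Bi ** B = mat 1" unfolding Bi_def using minv_props[OF invB] by auto
lemma Bt: "transpose B = B" using sym_transpose[OF B] .
lemma Bit: "transpose Bi = Bi" unfolding Bi_def using minv_sym[OF Bt invB] .
lemma C_eq: "C = Bi ** Bi"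
proof -
  have "A ** (Bi ** Bi) = mat 1"
  proof -
    have "B ** B ** (Bi ** Bi) = B ** ((B ** Bi) ** Bi)" by (simp add: matrix_mul_assoc)
    also have "\<dots> = mat 1" using BBi by simp
    finally show ?thesis unfolding BB .
  qed
  then show ?thesis unfolding C_def by (rule minv_unique)
qed
lemma Ct: "transpose C = C" unfolding C_eq by (simp add: matrix_transpose_mul Bit)
lemma AC: "A ** C = mat 1" "C ** A = mat 1"
proof -
  show "A ** C = mat 1" unfolding C_def using minv_props[OF sp_invertible[OF A]] by simp
  show "C ** A = mat 1" unfolding C_def using minv_props[OF sp_invertible[OF A]] by simp
qed

lemma quad_C: "x \<bullet> (C *v x) = (norm (Bi *v x))^2"
proof -
  have "x \<bullet> (C *v x) = x \<bullet> (Bi *v (Bi *v x))" unfolding C_eq by (simp add: matrix_vector_mul_assoc)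
  also have "\<dots> = (transpose Bi *v x) \<bullet> (Bi *v x)" by (rule dot_transpose)
  finally show ?thesis unfolding Bit power2_norm_eq_inner .
qed

lemma ell_norm: "ell_form A x = (norm (Bi *v x))^2"
  unfolding ell_form_def C_def[symmetric] by (rule quad_C)

lemma Bi_inj: "Bi *v x = 0 \<longleftrightarrow> x = 0"
proof
  assume "Bi *v x = 0"
  then have "B *v (Bi *v x) = 0" by simp
  then show "x = 0" by (simp add: matrix_vector_mul_assoc BBi)
qed simp

lemma detA: "det A > 0"
proof -
  have "det B \<noteq> 0" using invB by (simp add: invertible_det_nz)
  then show ?thesis unfolding BB[symmetric] det_mul using not_real_square_gt_zero by blast
qed

lemma diag_mult_left:
  fixes M :: "real^'n^'n"
  shows "((\<chi> r c. if r = c then d r else 0) ** M) $ i $ j = d i * M $ i $ j"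
proof -
  have "(\<Sum>k\<in>UNIV. (if i = k then d i else 0) * M$k$j) = (\<Sum>k\<in>UNIV. if k = i then d i * M$k$j else 0)"
    by (rule sum.cong) auto
  then show ?thesis by (simp add: matrix_matrix_mult_def)
qed

lemma diag_mult_right:
  fixes M :: "real^'n^'n"
  shows "(M ** (\<chi> r c. if r = c then d r else 0)) $ i $ j = M $ i $ j * d j"
  by (simp add: matrix_matrix_mult_def if_distrib sum.delta' cong: if_cong)

lemma decomp_minor:
  fixes U :: "real^'n^'n" and lam e :: "'n \<Rightarrow> real" and v :: "'n \<Rightarrow> real^'n"
  assumes U: "orthogonal_matrix U" and lam: "\<forall>i. lam i > 0" and e: "sign_vec e"
   and dec: "\<forall>i. e i *\<^sub>R v i = lam i *\<^sub>R (B *v column i U)"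
  shows "del_minor_det (transpose (edge_matrix v) ** edge_matrix v) i
           = (\<Prod>j\<in>UNIV. lam j)^2 * det A * ((transpose U ** C ** U)$i$i / (lam i)^2)"
proof -
  define d where "d i = e i * lam i" for i
  have e2: "e j * e j = 1" for j using e unfolding sign_vec_def by (metis mult_minus_left mult_1 minus_minus)
  have d0: "d j \<noteq> 0" for j using lam e2 unfolding d_def by (metis mult_eq_0_iff mult_zero_left zero_neq_one less_irrefl)
  have d2: "d j * d j = lam j * lam j" for j unfolding d_def using e2[of j] by (simp add: algebra_simps)
  have vi: "v j = d j *\<^sub>R (B *v column j U)" for j
  proof -
    have "v j = e j *\<^sub>R (e j *\<^sub>R v j)" using e2[of j] by simp
    also have "\<dots> = d j *\<^sub>R (B *v column j U)" using dec unfolding d_def by simp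
    finally show ?thesis .
  qed
  define Dm :: "real^'n^'n" where "Dm = (\<chi> r c. if r = c then d r else 0)"
  define Di :: "real^'n^'n" where "Di = (\<chi> r c. if r = c then 1 / d r else 0)"
  define Ut where "Ut = transpose U"
  have DmDi: "Dm ** Di = mat 1"
    unfolding Dm_def Di_def by (simp add: vec_eq_iff diag_mult_left mat_def d0)
  have UtU: "Ut ** U = mat 1" unfolding Ut_def using U by (simp add: orthogonal_matrix_def)
  have UUt: "U ** Ut = mat 1" unfolding Ut_def using U by (simp add: orthogonal_matrix_def)
  have DmT: "transpose Dm = Dm" unfolding Dm_def by (simp add: vec_eq_iff transpose_def)
  have VM: "edge_matrix v = B ** U ** Dm"
  proof -
    have "(B *v column c U) $ r = (B ** U) $ r $ c" for r c
      by (simp add: matrix_vector_mult_def matrix_matrix_mult_def column_def)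
    then show ?thesis unfolding Dm_def
      by (simp add: vec_eq_iff edge_matrix_def diag_mult_right vi mult.commute)
  qed
  define G where "G = transpose (edge_matrix v) ** edge_matrix v"
  have GE: "G = Dm ** Ut ** A ** U ** Dm"
    unfolding G_def VM Ut_def BB[symmetric] by (simp add: matrix_transpose_mul Bt DmT matrix_mul_assoc)
  define Gi where "Gi = Di ** (Ut ** C ** U) ** Di"
  have r1: "Y ** Dm ** Di = Y" for Y by (metis DmDi matrix_mul_assoc matrix_mul_rid)
  have r2: "Y ** U ** Ut = Y" for Y by (metis UUt matrix_mul_assoc matrix_mul_rid)
  have r3: "Y ** Ut ** U = Y" for Y by (metis UtU matrix_mul_assoc matrix_mul_rid)
  have r4: "Y ** A ** C = Y" for Y by (metis AC(1) matrix_mul_assoc matrix_mul_rid)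
  have GGi: "G ** Gi = mat 1" unfolding GE Gi_def by (simp add: matrix_mul_assoc r1 r2 r3 r4 DmDi)
  have Gii: "Gi $ i $ i = (transpose U ** C ** U)$i$i / (lam i)^2"
    unfolding Gi_def Di_def Ut_def by (simp add: diag_mult_right diag_mult_left power2_eq_square d2[symmetric])
  have detU: "det U * det U = 1" using det_orthogonal_matrix[OF U] by auto
  have detD: "det Dm = (\<Prod>j\<in>UNIV. d j)" unfolding Dm_def by (subst det_diagonal) auto
  have detG: "det G = (\<Prod>j\<in>UNIV. lam j)^2 * det A"
  proof -
    have "det G = det Dm * det Dm * det A * (det U * det U)" unfolding GE Ut_def by (simp add: det_mul det_transpose)
    also have "det Dm * det Dm = (\<Prod>j\<in>UNIV. lam j)^2"
      unfolding detD power2_eq_square prod.distrib[symmetric] d2 by simp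
    finally show ?thesis using detU by simp
  qed
  show ?thesis using del_minor_det_inv[OF GGi, of i] unfolding G_def[symmetric] Gii detG by simp
qed

lemma tmul_entry:
  fixes U N :: "real^'n^'n"
  shows "(transpose U ** N) $ i $ j = column i U \<bullet> column j N"
  by (simp add: matrix_matrix_mult_def inner_vec_def column_def transpose_def mult.commute)

lemma orthonormal:
  fixes U :: "real^'n^'n"
  assumes "orthogonal_matrix U"
  shows "column i U \<bullet> column k U = (if i = k then 1 else 0)"
proof -
  have "(transpose U ** U) $ i $ k = (if i = k then 1 else 0)"
    using assms by (simp add: orthogonal_matrix_def mat_def)
  then show ?thesis by (simp add: tmul_entry)
qed

lemma decomp_facts:
  fixes U :: "real^'n^'n" and lam e :: "'n \<Rightarrow> real" and v :: "'n \<Rightarrow> real^'n"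
  assumes U: "orthogonal_matrix U" and lam: "\<forall>i. lam i > 0" and e: "sign_vec e"
   and dec: "\<forall>i. e i *\<^sub>R v i = lam i *\<^sub>R (B *v column i U)"
   and x0: "ell_form A x0 = 1" and vx: "vertex v e = x0"
  shows "column i U \<bullet> (Bi *v x0) = lam i / 2"
    and "(\<Sum>i\<in>UNIV. (column i U \<bullet> (Bi *v x0))^2) = 1"
    and "(transpose U ** C ** U)$i$i = (norm (Bi *v column i U))^2"
    and "(transpose U ** C ** U)$i$i > 0"
    and "(\<Sum>i\<in>UNIV. (transpose U ** C ** U)$i$i) = trace C"
proof -
  define y0 where "y0 = Bi *v x0"
  have on: "column i U \<bullet> column k U = (if i = k then 1 else 0)" for i k using orthonormal[OF U] .
  have BiB: "Bi *v (B *v x) = x" for x by (simp add: matrix_vector_mul_assoc BBi)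
  have y0e: "y0 = (\<Sum>k\<in>UNIV. (lam k / 2) *\<^sub>R column k U)"
  proof -
    have "x0 = (1/2) *\<^sub>R (\<Sum>k\<in>UNIV. lam k *\<^sub>R (B *v column k U))"
      using vx dec unfolding vertex_def by simp
    then have "y0 = (1/2) *\<^sub>R (\<Sum>k\<in>UNIV. lam k *\<^sub>R column k U)"
      unfolding y0_def by (simp add: linear_sum[OF matrix_vector_mul_linear] matrix_vector_mult_scaleR BiB)
    then show ?thesis by (simp add: scaleR_sum_right)
  qed
  have beta: "column i U \<bullet> y0 = lam i / 2" for i
    unfolding y0e by (simp add: inner_sum_right on if_distrib cong: if_cong)
  then show "column i U \<bullet> (Bi *v x0) = lam i / 2" unfolding y0_def .
  have "y0 \<bullet> y0 = 1" using x0 unfolding ell_norm y0_def by (simp add: power2_norm_eq_inner)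
  moreover have "y0 \<bullet> y0 = (\<Sum>k\<in>UNIV. (column k U \<bullet> y0)^2)"
    by (subst (1) y0e) (simp add: inner_sum_left beta power2_eq_square)
  ultimately show "(\<Sum>i\<in>UNIV. (column i U \<bullet> (Bi *v x0))^2) = 1" unfolding y0_def by simp
  have q: "(transpose U ** C ** U)$i$i = column i U \<bullet> (C *v column i U)" for i
  proof -
    have "(transpose U ** C ** U) = transpose U ** (C ** U)" by (simp add: matrix_mul_assoc)
    moreover have "column i (C ** U) = C *v column i U"
      by (simp add: vec_eq_iff column_def matrix_matrix_mult_def matrix_vector_mult_def)
    ultimately show ?thesis by (simp add: tmul_entry)
  qed
  show q2: "(transpose U ** C ** U)$i$i = (norm (Bi *v column i U))^2" unfolding q quad_C ..
  have "column i U \<noteq> 0" using on[of i i] by auto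
  then have "Bi *v column i U \<noteq> 0" using Bi_inj by simp
  then show "(transpose U ** C ** U)$i$i > 0" unfolding q2 by simp
  have "trace (transpose U ** C ** U) = trace (U ** (transpose U ** C))" by (rule trace_mul_sym)
  also have "\<dots> = trace C" using U by (simp add: matrix_mul_assoc orthogonal_matrix_def)
  finally show "(\<Sum>i\<in>UNIV. (transpose U ** C ** U)$i$i) = trace C" unfolding trace_def .
qed

lemma decomp_area:
  fixes U :: "real^'n^'n" and lam e :: "'n \<Rightarrow> real" and v :: "'n \<Rightarrow> real^'n"
  assumes U: "orthogonal_matrix U" and lam: "\<forall>i. lam i > 0" and e: "sign_vec e"
   and dec: "\<forall>i. e i *\<^sub>R v i = lam i *\<^sub>R (B *v column i U)"
   and x0: "ell_form A x0 = 1" and vx: "vertex v e = x0"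
  shows "surface_area v = 2 ^ CARD('n) * sqrt (det A) *
     ((\<Prod>i\<in>UNIV. column i U \<bullet> (Bi *v x0)) *
      (\<Sum>i\<in>UNIV. sqrt ((transpose U ** C ** U)$i$i) / (column i U \<bullet> (Bi *v x0))))"
proof -
  define be where "be i = column i U \<bullet> (Bi *v x0)" for i
  define q where "q i = (transpose U ** C ** U)$i$i" for i
  have lb: "lam i = 2 * be i" for i using decomp_facts(1)[OF U lam e dec x0 vx, of i] unfolding be_def by simp
  have q0: "q i > 0" for i using decomp_facts(4)[OF U lam e dec x0 vx] unfolding q_def by simp
  have PL: "(\<Prod>i\<in>UNIV. lam i) > 0" using lam by (intro prod_pos) auto
  have PL2: "(\<Prod>i\<in>UNIV. lam i) = 2 ^ CARD('n) * (\<Prod>i\<in>UNIV. be i)"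
    unfolding lb by (simp add: prod.distrib)
  have sq: "sqrt (del_minor_det (transpose (edge_matrix v) ** edge_matrix v) i)
      = (\<Prod>j\<in>UNIV. lam j) * sqrt (det A) * (sqrt (q i) / lam i)" for i
  proof -
    have "sqrt (del_minor_det (transpose (edge_matrix v) ** edge_matrix v) i)
       = sqrt ((\<Prod>j\<in>UNIV. lam j)^2) * sqrt (det A) * (sqrt (q i) / sqrt ((lam i)^2))"
      unfolding decomp_minor[OF U lam e dec] q_def by (simp add: real_sqrt_mult real_sqrt_divide)
    also have "\<dots> = (\<Prod>j\<in>UNIV. lam j) * sqrt (det A) * (sqrt (q i) / lam i)"
    proof -
      have "sqrt ((\<Prod>j\<in>UNIV. lam j)^2) = (\<Prod>j\<in>UNIV. lam j)" using PL by simp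
      moreover have "sqrt ((lam i)^2) = lam i" using lam by (simp add: less_imp_le)
      ultimately show ?thesis by simp
    qed
    finally show ?thesis .
  qed
  have "surface_area v = 2 * (\<Sum>i\<in>UNIV. (\<Prod>j\<in>UNIV. lam j) * sqrt (det A) * (sqrt (q i) / lam i))"
    unfolding surface_area_def sq ..
  also have "\<dots> = (\<Prod>j\<in>UNIV. lam j) * sqrt (det A) * (\<Sum>i\<in>UNIV. sqrt (q i) / be i)"
    unfolding lb by (simp add: sum_distrib_left sum_divide_distrib)
  also have "\<dots> = 2 ^ CARD('n) * sqrt (det A) * ((\<Prod>i\<in>UNIV. be i) * (\<Sum>i\<in>UNIV. sqrt (q i) / be i))"
    unfolding PL2 by (simp add: algebra_simps)
  finally show ?thesis unfolding be_def q_def .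
qed

lemma sum_split2:
  fixes f :: "'n \<Rightarrow> real^'n"
  assumes "i \<noteq> j"
  shows "(\<Sum>k\<in>UNIV. f k) = f i + f j + (\<Sum>k\<in>UNIV - {i, j}. f k)"
proof -
  have S: "(UNIV::'n set) = insert i (insert j (UNIV - {i, j}))" by auto
  show ?thesis by (subst S) (use assms in \<open>simp add: sum.insert_remove add.assoc\<close>)
qed

lemma inscribed_orth:
  fixes v :: "'n \<Rightarrow> real^'n"
  assumes P: "inscribed A v" and ij: "i \<noteq> j"
  shows "(Bi *v v i) \<bullet> (Bi *v v j) = 0"
proof -
  define w where "w k = Bi *v v k" for k
  have N4: "norm (\<Sum>k\<in>UNIV. ep k *\<^sub>R w k)^2 = 4" if "sign_vec ep" for ep
  proof -
    have "ell_form A (vertex v ep) = 1" using P that unfolding inscribed_def by blast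
    then have "norm (Bi *v vertex v ep)^2 = 1" unfolding ell_norm .
    moreover have "Bi *v vertex v ep = (1/2) *\<^sub>R (\<Sum>k\<in>UNIV. ep k *\<^sub>R w k)"
      unfolding vertex_def w_def by (simp add: linear_sum[OF matrix_vector_mul_linear] matrix_vector_mult_scaleR)
    ultimately have "(norm (\<Sum>k\<in>UNIV. ep k *\<^sub>R w k) / 2)^2 = 1" by simp
    then show ?thesis by (simp add: power_divide)
  qed
  define s where "s = (\<Sum>k\<in>UNIV - {i, j}. w k)"
  define ep where "ep a b = (\<lambda>k. if k = i then a else if k = j then b else (1::real))" for a b
  have sv: "sign_vec (ep a b)" if "a = 1 \<or> a = -1" "b = 1 \<or> b = -1" for a b
    using that unfolding sign_vec_def ep_def by auto
  have sm: "(\<Sum>k\<in>UNIV. ep a b k *\<^sub>R w k) = a *\<^sub>R w i + b *\<^sub>R w j + s" for a b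
  proof -
    have "(\<Sum>k\<in>UNIV - {i, j}. ep a b k *\<^sub>R w k) = s" unfolding s_def ep_def by (rule sum.cong) auto
    then show ?thesis using sum_split2[OF ij, of "\<lambda>k. ep a b k *\<^sub>R w k"] ij unfolding ep_def by simp
  qed
  have e: "(a *\<^sub>R w i + b *\<^sub>R w j + s) \<bullet> (a *\<^sub>R w i + b *\<^sub>R w j + s) = 4"
    if "a = 1 \<or> a = -1" "b = 1 \<or> b = -1" for a b
    using N4[OF sv[OF that]] unfolding sm power2_norm_eq_inner .
  have e1: "(w i + w j + s) \<bullet> (w i + w j + s) = 4" using e[of 1 1] by simp
  have e2: "(- w i - w j + s) \<bullet> (- w i - w j + s) = 4" using e[of "-1" "-1"] by simp
  have e3: "(w i - w j + s) \<bullet> (w i - w j + s) = 4" using e[of 1 "-1"] by simp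
  have e4: "(- w i + w j + s) \<bullet> (- w i + w j + s) = 4" using e[of "-1" 1] by simp
  have "w i \<bullet> w j = 0"
    using e1 e2 e3 e4 by (simp add: inner_add_left inner_add_right inner_diff_left inner_diff_right inner_commute)
  then show ?thesis unfolding w_def .
qed

lemma inscribed_decomp:
  fixes v :: "'n \<Rightarrow> real^'n"
  assumes P: "inscribed A v" and e: "sign_vec e"
  shows "\<exists>lam U. orthogonal_matrix U \<and> (\<forall>i. lam i > 0 \<and> e i *\<^sub>R v i = lam i *\<^sub>R (B *v column i U))"
proof -
  define w where "w k = Bi *v v k" for k
  define lam where "lam k = norm (w k)" for k
  define u where "u k = (e k / lam k) *\<^sub>R w k" for k
  define U :: "real^'n^'n" where "U = (\<chi> r c. u c $ r)"
  have e2: "\<bar>e k\<bar> = 1" for k using e unfolding sign_vec_def by (metis abs_1 abs_minus)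
  have e2': "e k * e k = 1" for k using e unfolding sign_vec_def by (metis mult_1 mult_minus_left minus_minus)
  have v0: "v k \<noteq> 0" for k
  proof
    assume "v k = 0"
    then have "0 \<in> range v" by (metis rangeI)
    then show False using P unfolding inscribed_def using dependent_zero by blast
  qed
  have w0: "w k \<noteq> 0" for k unfolding w_def using v0 Bi_inj by simp
  have lam0: "lam k > 0" for k unfolding lam_def using w0 by simp
  have col: "column c U = u c" for c unfolding U_def by (simp add: column_def vec_eq_iff)
  have nu: "norm (u k) = 1" for k unfolding u_def lam_def using e2 w0 by simp
  have ou: "orthogonal (u i) (u j)" if "i \<noteq> j" for i j
    using inscribed_orth[OF P that] unfolding orthogonal_def u_def w_def by simp
  have U: "orthogonal_matrix U" unfolding orthogonal_matrix_orthonormal_columns col using nu ou by simp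
  have dec: "e i *\<^sub>R v i = lam i *\<^sub>R (B *v column i U)" for i
  proof -
    have "B *v w i = v i" unfolding w_def by (simp add: matrix_vector_mul_assoc BBi)
    then have "lam i *\<^sub>R (B *v column i U) = (lam i * (e i / lam i)) *\<^sub>R v i"
      unfolding col u_def by (simp add: matrix_vector_mult_scaleR)
    also have "\<dots> = e i *\<^sub>R v i" using lam0[of i] by simp
    finally show ?thesis by simp
  qed
  show ?thesis using U dec lam0 by blast
qed

lemma orth_sum_inner:
  fixes U :: "real^'n^'n"
  assumes U: "orthogonal_matrix U"
  shows "column j U \<bullet> (\<Sum>i\<in>UNIV. c i *\<^sub>R column i U) = c j"
  by (simp add: inner_sum_right orthonormal[OF U] if_distrib cong: if_cong)

lemma orth_sum_norm:
  fixes U :: "real^'n^'n"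
  assumes U: "orthogonal_matrix U"
  shows "(norm (\<Sum>i\<in>UNIV. c i *\<^sub>R column i U))^2 = (\<Sum>i\<in>UNIV. (c i)^2)"
  unfolding power2_norm_eq_inner
  by (subst (1) inner_sum_left) (simp add: orth_sum_inner[OF U] power2_eq_square)

lemma build_inscribed:
  fixes U :: "real^'n^'n" and lam :: "'n \<Rightarrow> real" and w :: "'n \<Rightarrow> real^'n"
  assumes U: "orthogonal_matrix U" and lam: "\<forall>i. lam i > 0"
    and w: "\<forall>i. w i = lam i *\<^sub>R (B *v column i U)"
    and l4: "(\<Sum>i\<in>UNIV. (lam i)^2) = 4"
  shows "inscribed A w"
proof -
  have BiB: "Bi *v (B *v x) = x" for x by (simp add: matrix_vector_mul_assoc BBi)
  have Biw: "Bi *v (\<Sum>i\<in>UNIV. c i *\<^sub>R w i) = (\<Sum>i\<in>UNIV. (c i * lam i) *\<^sub>R column i U)" for c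
    using w by (simp add: linear_sum[OF matrix_vector_mul_linear] matrix_vector_mult_scaleR BiB)
  have zero: "c j = 0" if "(\<Sum>i\<in>UNIV. c i *\<^sub>R w i) = 0" for c j
  proof -
    have "(\<Sum>i\<in>UNIV. (c i * lam i) *\<^sub>R column i U) = 0" using Biw[of c] that by simp
    then have "c j * lam j = 0" using orth_sum_inner[OF U, of j "\<lambda>i. c i * lam i"] by simp
    then show ?thesis using lam by (metis less_irrefl mult_eq_0_iff)
  qed
  have inj: "inj w"
  proof (rule injI)
    fix i j assume h: "w i = w j"
    show "i = j"
    proof (rule ccontr)
      assume ij: "i \<noteq> j"
      define c where "c k = (if k = i then 1 else if k = j then -1 else (0::real))" for k
      have "(\<Sum>k\<in>UNIV. c k *\<^sub>R w k) = c i *\<^sub>R w i + c j *\<^sub>R w j + (\<Sum>k\<in>UNIV - {i, j}. c k *\<^sub>R w k)"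
        by (rule sum_split2[OF ij])
      also have "\<dots> = 0" using h ij unfolding c_def by simp
      finally have "c i = 0" using zero by blast
      then show False unfolding c_def by simp
    qed
  qed
  have ind: "independent (range w)"
  proof (rule independent_if_scalars_zero)
    show "finite (range w)" by simp
  next
    fix f x assume h: "(\<Sum>x\<in>range w. f x *\<^sub>R x) = 0" and x: "x \<in> range w"
    have "(\<Sum>x\<in>range w. f x *\<^sub>R x) = (\<Sum>i\<in>UNIV. f (w i) *\<^sub>R w i)"
      using inj by (simp add: sum.reindex)
    then have "(\<Sum>i\<in>UNIV. f (w i) *\<^sub>R w i) = 0" using h by simp
    then have "f (w i) = 0" for i using zero[of "\<lambda>i. f (w i)"] by blast
    then show "f x = 0" using x by auto
  qed
  have vert: "ell_form A (vertex w ep) = 1" if "sign_vec ep" for ep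
  proof -
    have ep2: "(ep i)^2 = 1" for i using that unfolding sign_vec_def by (metis power2_minus one_power2)
    have "Bi *v vertex w ep = (1/2) *\<^sub>R (Bi *v (\<Sum>i\<in>UNIV. ep i *\<^sub>R w i))"
      unfolding vertex_def by (simp only: matrix_vector_mult_scaleR)
    also have "\<dots> = (\<Sum>i\<in>UNIV. ((1/2) * (ep i * lam i)) *\<^sub>R column i U)"
      unfolding Biw by (simp add: scaleR_sum_right)
    finally have "Bi *v vertex w ep = (\<Sum>i\<in>UNIV. ((1/2) * (ep i * lam i)) *\<^sub>R column i U)" .
    then have "ell_form A (vertex w ep) = (\<Sum>i\<in>UNIV. ((1/2) * (ep i * lam i))^2)"
      unfolding ell_norm using orth_sum_norm[OF U, of "\<lambda>i. (1/2) * (ep i * lam i)"] by simp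
    also have "\<dots> = (\<Sum>i\<in>UNIV. (lam i)^2) / 4"
      by (simp add: power_mult_distrib ep2 sum_divide_distrib power_divide)
    finally show ?thesis using l4 by simp
  qed
  show ?thesis unfolding inscribed_def using inj ind vert by blast
qed

lemma two_dim_construct:
  assumes c2: "CARD('n) = 2" and x0: "ell_form A x0 = 1"
  shows "\<exists>(lam::'n \<Rightarrow> real) (U::real^'n^'n). orthogonal_matrix U \<and> (\<forall>i. lam i > 0) \<and>
     vertex (\<lambda>i. lam i *\<^sub>R (B *v column i U)) (\<lambda>_. 1) = x0 \<and>
     (\<exists>c. \<forall>i. sqrt ((transpose U ** C ** U)$i$i) = c * (1 / (column i U \<bullet> (Bi *v x0))))"
proof -
  define y0 where "y0 = Bi *v x0"
  have ny: "norm y0 = 1"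
  proof -
    have "norm y0 ^ 2 = 1" using x0 unfolding ell_norm y0_def .
    then show ?thesis using norm_ge_zero[of y0] by (metis abs_of_nonneg power2_eq_1_iff abs_neg_one abs_1 one_neq_neg_one)
  qed
  obtain k :: 'n where True by simp
  obtain Q where Q: "orthogonal_matrix Q" "Q *v axis k 1 = y0"
    using orthogonal_matrix_exists_basis[OF ny] by metis
  have colk: "column k Q = y0" using Q(2)
    by (simp add: vec_eq_iff column_def matrix_vector_mult_def axis_def if_distrib cong: if_cong)
  obtain k' :: 'n where kk: "k' \<noteq> k"
  proof -
    obtain p q :: 'n where "(UNIV::'n set) = {p, q}" "p \<noteq> q" using c2 unfolding card_2_iff by blast
    then show ?thesis using that by (metis insert_iff)
  qed
  have UN: "(UNIV::'n set) = {k, k'}"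
  proof -
    obtain p q :: 'n where pq: "(UNIV::'n set) = {p, q}" "p \<noteq> q" using c2 unfolding card_2_iff by blast
    then show ?thesis using kk by (metis UNIV_I insertE singletonD subsetI subset_antisym insert_subset)
  qed
  have sum2: "(\<Sum>i\<in>UNIV. f i) = f k + f k'" for f :: "'n \<Rightarrow> real^'n"
    unfolding UN using kk by simp
  define z where "z = column k' Q"
  have yz: "y0 \<bullet> z = 0" "y0 \<bullet> y0 = 1" "z \<bullet> z = 1"
    using orthonormal[OF Q(1), of k k'] orthonormal[OF Q(1), of k k] orthonormal[OF Q(1), of k' k'] kk
    unfolding z_def colk by auto
  define a where "a = y0 \<bullet> (C *v y0)"
  define b where "b = y0 \<bullet> (C *v z)"
  define d where "d = z \<bullet> (C *v z)"
  have a0: "a > 0"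
  proof -
    have "y0 \<noteq> 0" using ny by auto
    then have "Bi *v y0 \<noteq> 0" using Bi_inj by simp
    then show ?thesis unfolding a_def quad_C by simp
  qed
  have zy: "z \<bullet> (C *v y0) = b" unfolding b_def
    by (metis Ct dot_transpose inner_commute)
  have qf: "(p *\<^sub>R y0 + r *\<^sub>R z) \<bullet> (C *v (p *\<^sub>R y0 + r *\<^sub>R z)) = p^2 * a + 2 * p * r * b + r^2 * d" for p r
    unfolding a_def d_def
    by (simp add: matrix_vector_right_distrib matrix_vector_mult_scaleR inner_add_left inner_add_right zy[unfolded b_def] b_def[symmetric] power2_eq_square algebra_simps)
  define g where "g t = ((cos t)^2 * a + 2 * cos t * sin t * b + (sin t)^2 * d) * (cos t)^2
                      - ((sin t)^2 * a + 2 * sin t * (- cos t) * b + (- cos t)^2 * d) * (sin t)^2" for t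
  have g0: "g 0 = a" unfolding g_def by simp
  have gp: "g (pi/2) = - a" unfolding g_def by simp
  have cg: "continuous_on {0..pi/2} g" unfolding g_def by (intro continuous_intros)
  obtain th where th: "0 \<le> th" "th \<le> pi/2" "g th = 0"
    using IVT2'[of g "pi/2" 0 0, OF _ _ _ cg] g0 gp a0 by auto
  have th1: "0 < th" using th g0 a0 by (metis less_eq_real_def less_irrefl)
  have th2: "th < pi/2" using th gp a0 by (metis less_eq_real_def neg_less_0_iff_less less_irrefl)
  define c where "c = cos th"
  define s where "s = sin th"
  have c0: "c > 0" unfolding c_def using th1 th2 by (rule cos_gt_zero)
  have s0: "s > 0" unfolding s_def using th1 th2 by (intro sin_gt_zero) auto
  have cs: "c^2 + s^2 = 1" unfolding c_def s_def by simp
  define u1 where "u1 = c *\<^sub>R y0 + s *\<^sub>R z"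
  define u2 where "u2 = s *\<^sub>R y0 + (- c) *\<^sub>R z"
  define U :: "real^'n^'n" where "U = (\<chi> r j. (if j = k then u1 else u2) $ r)"
  have colU: "column j U = (if j = k then u1 else u2)" for j unfolding U_def by (simp add: column_def vec_eq_iff)
  have n1: "u1 \<bullet> u1 = 1" "u2 \<bullet> u2 = 1" "u1 \<bullet> u2 = 0"
    unfolding u1_def u2_def using yz cs
    by (simp_all add: inner_add_left inner_add_right inner_commute power2_eq_square algebra_simps)
  have U: "orthogonal_matrix U"
    unfolding orthogonal_matrix_orthonormal_columns
  proof (intro conjI allI impI)
    fix i show "norm (column i U) = 1" unfolding colU using n1 by (simp add: norm_eq_1)
  next
    fix i j :: 'n assume "i \<noteq> j"
    moreover have "i \<in> {k, k'}" "j \<in> {k, k'}" using UN by auto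
    ultimately have "(i = k \<and> j = k') \<or> (i = k' \<and> j = k)" by blast
    then show "orthogonal (column i U) (column j U)"
      unfolding colU orthogonal_def using n1 kk by (auto simp: inner_commute)
  qed
  define lam where "lam i = (if i = k then 2 * c else 2 * s)" for i
  have lam0: "\<forall>i. lam i > 0" unfolding lam_def using c0 s0 by simp
  have vert: "vertex (\<lambda>i. lam i *\<^sub>R (B *v column i U)) (\<lambda>_. 1) = x0"
  proof -
    have "vertex (\<lambda>i. lam i *\<^sub>R (B *v column i U)) (\<lambda>_. 1) = B *v (c *\<^sub>R u1 + s *\<^sub>R u2)"
    proof -
      have h: "(1/2) *\<^sub>R ((2 * c) *\<^sub>R X + (2 * s) *\<^sub>R Y) = c *\<^sub>R X + s *\<^sub>R Y" for X Y :: "real^'n"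
        by (simp add: scaleR_right_distrib)
      show ?thesis
        unfolding vertex_def sum2 colU lam_def using kk
        by (simp add: matrix_vector_right_distrib matrix_vector_mult_scaleR h)
    qed
    also have "c *\<^sub>R u1 + s *\<^sub>R u2 = y0"
    proof -
      have "c *\<^sub>R u1 + s *\<^sub>R u2 = (c^2 + s^2) *\<^sub>R y0"
        unfolding u1_def u2_def by (simp add: algebra_simps power2_eq_square)
      then show ?thesis using cs by simp
    qed
    also have "B *v y0 = x0" unfolding y0_def by (simp add: matrix_vector_mul_assoc BBi)
    finally show ?thesis .
  qed
  have be: "column i U \<bullet> (Bi *v x0) = (if i = k then c else s)" for i
    unfolding colU y0_def[symmetric] u1_def u2_def using yz by (simp add: inner_add_left inner_add_right inner_diff_right inner_commute)
  have qU: "(transpose U ** C ** U)$i$i = column i U \<bullet> (C *v column i U)" for i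
  proof -
    have "(transpose U ** C ** U) = transpose U ** (C ** U)" by (simp add: matrix_mul_assoc)
    moreover have "column i (C ** U) = C *v column i U"
      by (simp add: vec_eq_iff column_def matrix_matrix_mult_def matrix_vector_mult_def)
    ultimately show ?thesis by (simp add: tmul_entry)
  qed
  define q1 where "q1 = c^2 * a + 2 * c * s * b + s^2 * d"
  define q2 where "q2 = s^2 * a + 2 * s * (- c) * b + (- c)^2 * d"
  have Q1: "(transpose U ** C ** U)$k$k = q1" unfolding qU colU u1_def q1_def by (simp add: qf)
  have Q2: "(transpose U ** C ** U)$k'$k' = q2" unfolding qU colU u2_def q2_def using kk qf[of s "- c"] by simp
  have q1p: "q1 \<ge> 0" and q2p: "q2 \<ge> 0"
    using decomp_facts(3)[of U] Q1 Q2 by (metis quad_C qU zero_le_power2)+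
  have geq: "q1 * c^2 = q2 * s^2" using th(3) unfolding g_def q1_def q2_def c_def s_def by simp
  then have "sqrt q1 * c = sqrt q2 * s" using c0 s0 q1p q2p
    by (metis real_sqrt_mult real_sqrt_pow2_iff less_imp_le real_sqrt_unique power2_eq_square zero_le_mult_iff)
  then have sq: "sqrt q1 * c = sqrt q2 * s" .
  have "\<forall>i. sqrt ((transpose U ** C ** U)$i$i) = (sqrt q1 * c) * (1 / (column i U \<bullet> (Bi *v x0)))"
  proof
    fix i :: 'n
    have "i \<in> {k, k'}" using UN by auto
    then show "sqrt ((transpose U ** C ** U)$i$i) = (sqrt q1 * c) * (1 / (column i U \<bullet> (Bi *v x0)))"
    proof
      assume "i = k" then show ?thesis unfolding be using Q1 c0 by simp
    next
      assume "i \<in> {k'}" then have ik: "i = k'" by simp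
      then have "sqrt ((transpose U ** C ** U)$i$i) = sqrt q2" using Q2 by simp
      also have "\<dots> = (sqrt q2 * s) * (1 / s)" using s0 by simp
      finally show ?thesis unfolding be sq[symmetric] using ik kk by simp
    qed
  qed
  then show ?thesis using U lam0 vert by blast
qed

end



context ellip begin

lemma area_char:
  fixes U :: "real^'n^'n" and lam e :: "'n \<Rightarrow> real" and v :: "'n \<Rightarrow> real^'n"
  assumes n2: "CARD('n) \<ge> 2" and U: "orthogonal_matrix U" and lam: "\<forall>i. lam i > 0" and e: "sign_vec e"
   and dec: "\<forall>i. e i *\<^sub>R v i = lam i *\<^sub>R (B *v column i U)"
   and x0: "ell_form A x0 = 1" and vx: "vertex v e = x0"
  defines "bnd \<equiv> 2 ^ CARD('n) * real CARD('n) powr (- (real CARD('n) - 2) / 2) * sqrt (det A) * sqrt (trace C)"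
  shows "surface_area v \<le> bnd"
    and "surface_area v = bnd \<longleftrightarrow>
          (\<exists>c. \<forall>i. sqrt ((transpose U ** C ** U)$i$i) = c * (1 / (column i U \<bullet> (Bi *v x0)))) \<and>
          (CARD('n) \<ge> 3 \<longrightarrow> (\<forall>i. column i U \<bullet> (Bi *v x0) = 1 / sqrt (real CARD('n))))"
proof -
  define be where "be i = column i U \<bullet> (Bi *v x0)" for i
  define al where "al i = sqrt ((transpose U ** C ** U)$i$i)" for i
  have bp: "\<forall>i\<in>UNIV. be i > 0"
  proof
    fix i :: 'n
    have "be i = lam i / 2" using decomp_facts(1)[OF U lam e dec x0 vx] unfolding be_def .
    moreover have "lam i > 0" using lam by blast
    ultimately show "be i > 0" by simp
  qed
  have ap: "\<forall>i\<in>UNIV. al i > 0" using decomp_facts(4)[OF U lam e dec x0 vx] unfolding al_def by simp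
  have b1: "(\<Sum>i\<in>UNIV. (be i)^2) = 1" using decomp_facts(2)[OF U lam e dec x0 vx] unfolding be_def .
  have a2: "(\<Sum>i\<in>UNIV. (al i)^2) = trace C"
    using decomp_facts(4,5)[OF U lam e dec x0 vx] unfolding al_def by (simp add: less_imp_le)
  have SA: "surface_area v = 2 ^ CARD('n) * sqrt (det A) * ((\<Prod>i\<in>UNIV. be i) * (\<Sum>i\<in>UNIV. al i / be i))"
    using decomp_area[OF U lam e dec x0 vx] unfolding be_def al_def .
  have bndM: "bnd = 2 ^ CARD('n) * sqrt (det A) * (sqrt (\<Sum>i\<in>UNIV. (al i)^2) * real CARD('n) powr (- (real CARD('n) - 2) / 2))"
    unfolding bnd_def a2 by (simp add: algebra_simps)
  have pos: "2 ^ CARD('n) * sqrt (det A) > 0" using detA by simp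
  note KI = key_ineq[of UNIV be al, OF finite_class.finite_UNIV _ bp ap b1]
  show "surface_area v \<le> bnd" unfolding SA bndM
    by (rule mult_left_mono[OF KI(1)[OF n2]]) (use pos in simp)
  show "surface_area v = bnd \<longleftrightarrow>
          (\<exists>c. \<forall>i. sqrt ((transpose U ** C ** U)$i$i) = c * (1 / (column i U \<bullet> (Bi *v x0)))) \<and>
          (CARD('n) \<ge> 3 \<longrightarrow> (\<forall>i. column i U \<bullet> (Bi *v x0) = 1 / sqrt (real CARD('n))))"
    proof -
      have "det A \<noteq> 0" using detA by simp
      then show ?thesis unfolding SA bndM using KI(2) n2 pos unfolding be_def[symmetric] al_def[symmetric] by simp
    qed
qed

end

theorem proposition4p7:
  fixes A B :: "real^'n^'n" and x0 :: "real^'n"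
    and v :: "'n \<Rightarrow> real^'n" and e :: "'n \<Rightarrow> real"
  assumes n2: "CARD('n) \<ge> 2"
    and A: "sym_pos_def A"
    and B: "sym_pos_def B" "B ** B = A"
    and x0: "ell_form A x0 = 1"
    and P: "inscribed A v"
    and e: "sign_vec e" "vertex v e = x0"
  shows
   "let n = real CARD('n); C = matrix_inv A; y0 = matrix_inv B *v x0;
        bound = 2 ^ CARD('n) * n powr (- (n - 2) / 2) * sqrt (det A) * sqrt (trace C);
        decomp = (\<lambda>(lam::'n \<Rightarrow> real) (U::real^'n^'n). orthogonal_matrix U \<and>
                   (\<forall>i. lam i > 0 \<and> e i *\<^sub>R v i = lam i *\<^sub>R (B *v column i U)));
        beta = (\<lambda>U i. column i U \<bullet> y0);
        alpha = (\<lambda>U i. sqrt ((transpose U ** C ** U) $ i $ i))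
    in surface_area v \<le> bound
     \<and> (CARD('n) \<ge> 3 \<longrightarrow>
          (\<forall>lam U. decomp lam U \<longrightarrow>
             (surface_area v = bound \<longleftrightarrow>
                (\<forall>i. beta U i = 1 / sqrt n) \<and>
                (\<forall>i. (transpose U ** C ** U) $ i $ i = trace C / n))))
     \<and> (CARD('n) = 2 \<longrightarrow>
          (\<exists>w. inscribed A w \<and> has_vertex w x0 \<and> surface_area w = bound) \<and>
          (\<forall>lam U. decomp lam U \<longrightarrow>
             (surface_area v = bound \<longleftrightarrow>
                (\<exists>c. \<forall>i. alpha U i = c * (1 / beta U i)))))"
proof -
  interpret E: ellip A B using A B by unfold_locales
  have Cd: "matrix_inv A = E.C" by (simp add: E.C_def)
  have Bd: "matrix_inv B = E.Bi" by (simp add: E.Bi_def)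
  define bound where "bound = 2 ^ CARD('n) * real CARD('n) powr (- (real CARD('n) - 2) / 2) * sqrt (det A) * sqrt (trace E.C)"
  have part1: "surface_area v \<le> bound"
  proof -
    obtain lam U where "orthogonal_matrix U" "\<forall>i. lam i > 0 \<and> e i *\<^sub>R v i = lam i *\<^sub>R (B *v column i U)"
      using E.inscribed_decomp[OF P e(1)] by blast
    then show ?thesis using E.area_char(1)[OF n2 _ _ e(1) _ x0 e(2)] unfolding bound_def by blast
  qed
  have part2: "surface_area v = bound \<longleftrightarrow>
                (\<forall>i. column i U \<bullet> (E.Bi *v x0) = 1 / sqrt (real CARD('n))) \<and>
                (\<forall>i. (transpose U ** E.C ** U) $ i $ i = trace E.C / real CARD('n))"
    if n3: "CARD('n) \<ge> 3" and U: "orthogonal_matrix U" and dl: "\<forall>i. lam i > 0 \<and> e i *\<^sub>R v i = lam i *\<^sub>R (B *v column i U)"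
    for lam U
  proof -
    have lam: "\<forall>i. lam i > 0" and dec: "\<forall>i. e i *\<^sub>R v i = lam i *\<^sub>R (B *v column i U)" using dl by auto
    note ch = E.area_char(2)[OF n2 U lam e(1) dec x0 e(2)]
    define be where "be i = column i U \<bullet> (E.Bi *v x0)" for i
    define q where "q i = (transpose U ** E.C ** U)$i$i" for i
    have q0: "q i > 0" for i using E.decomp_facts(4)[OF U lam e(1) dec x0 e(2)] unfolding q_def by simp
    have qs: "(\<Sum>i\<in>UNIV. q i) = trace E.C" using E.decomp_facts(5)[OF U lam e(1) dec x0 e(2)] unfolding q_def .
    have Np: "real CARD('n) > 0" by simp
    have "(\<exists>c. \<forall>i. sqrt (q i) = c * (1 / be i)) \<and> (\<forall>i. be i = 1 / sqrt (real CARD('n)))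
          \<longleftrightarrow> (\<forall>i. be i = 1 / sqrt (real CARD('n))) \<and> (\<forall>i. q i = trace E.C / real CARD('n))"
    proof
      assume h: "(\<exists>c. \<forall>i. sqrt (q i) = c * (1 / be i)) \<and> (\<forall>i. be i = 1 / sqrt (real CARD('n)))"
      then obtain c where c: "\<forall>i. sqrt (q i) = c * sqrt (real CARD('n))" by auto
      then have "\<forall>i. q i = (c * sqrt (real CARD('n)))^2" using q0 by (metis less_imp_le real_sqrt_pow2)
      then have qi: "\<forall>i. q i = q j" for j by simp
      have tq: "trace E.C = real CARD('n) * q j" for j
      proof -
        have "q = (\<lambda>_. q j)" using qi by auto
        then have "sum q UNIV = real CARD('n) * q j" by (metis sum_constant)
        then show ?thesis unfolding qs[symmetric] by simp
      qed
      have "q i = trace E.C / real CARD('n)" for i using tq[of i] Np by (simp add: field_simps)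
      then show "(\<forall>i. be i = 1 / sqrt (real CARD('n))) \<and> (\<forall>i. q i = trace E.C / real CARD('n))"
        using h by simp
    next
      assume h: "(\<forall>i. be i = 1 / sqrt (real CARD('n))) \<and> (\<forall>i. q i = trace E.C / real CARD('n))"
      then have "\<forall>i. sqrt (q i) = (sqrt (trace E.C / real CARD('n)) / sqrt (real CARD('n))) * (1 / be i)"
        using Np by simp
      then show "(\<exists>c. \<forall>i. sqrt (q i) = c * (1 / be i)) \<and> (\<forall>i. be i = 1 / sqrt (real CARD('n)))"
        using h by blast
    qed
    then show ?thesis using ch n3 unfolding be_def q_def bound_def by simp
  qed
  have part3: "\<exists>w. inscribed A w \<and> has_vertex w x0 \<and> surface_area w = bound" if c2: "CARD('n) = 2"
  proof -
    obtain lam U where U: "orthogonal_matrix U" and lam: "\<forall>i. lam i > 0"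
      and vx: "vertex (\<lambda>i. lam i *\<^sub>R (B *v column i U)) (\<lambda>_. 1) = x0"
      and cc: "\<exists>c. \<forall>i. sqrt ((transpose U ** E.C ** U)$i$i) = c * (1 / (column i U \<bullet> (E.Bi *v x0)))"
      using E.two_dim_construct[OF c2 x0] by blast
    define w where "w i = lam i *\<^sub>R (B *v column i U)" for i
    have s1: "sign_vec (\<lambda>_. 1::real)" unfolding sign_vec_def by simp
    have dec: "\<forall>i. (\<lambda>_. 1::real) i *\<^sub>R w i = lam i *\<^sub>R (B *v column i U)" unfolding w_def by simp
    have vx': "vertex w (\<lambda>_. 1) = x0" using vx unfolding w_def .
    have l4: "(\<Sum>i\<in>UNIV. (lam i)^2) = 4"
    proof -
      have bl: "column i U \<bullet> (E.Bi *v x0) = lam i / 2" for i using E.decomp_facts(1)[OF U lam s1 dec x0 vx'] .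
      have "(\<Sum>i\<in>UNIV. (lam i / 2)^2) = 1"
        using E.decomp_facts(2)[OF U lam s1 dec x0 vx'] unfolding bl .
      then show ?thesis by (simp add: power_divide sum_divide_distrib[symmetric])
    qed
    have ins: "inscribed A w" using E.build_inscribed[OF U lam _ l4] unfolding w_def by simp
    have hv: "has_vertex w x0" unfolding has_vertex_def using s1 vx' by blast
    have "surface_area w = bound"
      using E.area_char(2)[OF n2 U lam s1 dec x0 vx'] cc c2 unfolding bound_def by simp
    then show ?thesis using ins hv by blast
  qed
  have part4: "surface_area v = bound \<longleftrightarrow>
                (\<exists>c. \<forall>i. sqrt ((transpose U ** E.C ** U) $ i $ i) = c * (1 / (column i U \<bullet> (E.Bi *v x0))))"
    if c2: "CARD('n) = 2" and U: "orthogonal_matrix U" and dl: "\<forall>i. lam i > 0 \<and> e i *\<^sub>R v i = lam i *\<^sub>R (B *v column i U)"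
    for lam U
  proof -
    have lam: "\<forall>i. lam i > 0" and dec: "\<forall>i. e i *\<^sub>R v i = lam i *\<^sub>R (B *v column i U)" using dl by auto
    show ?thesis using E.area_char(2)[OF n2 U lam e(1) dec x0 e(2)] c2 unfolding bound_def by simp
  qed
  show ?thesis
    unfolding Let_def Cd Bd bound_def[symmetric]
    using part1 part2 part3 part4 by blast
qed


end
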